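(* Suppose every $f_i$ is monotone and submodular. Let $S^{(1)}_{\rm tr},S^{(1)}_1,\dots,S^{(1)}_m$ be the output of Algorithm 1 and $S^{(2)}_{\rm tr},S^{(2)}_1,\dots,S^{(2)}_m$ the output of Algorithm 2. Set $\theta_1=\sum_i f_i(S^{(1)}_{\rm tr}\cup S^{(1)}_i)$, $\theta_2=\sum_i f_i(S^{(2)}_{\rm tr}\cup S^{(2)}_i)$, $\beta=\sum_i f_i(S^{(1)}_{\rm tr})$, $\gamma=\sum_i f_i(S^{(2)}_i)$. Then $$\theta_1\ge (1-1/e)(\mathrm{OPT}-\gamma)+\beta-2(\theta_2-\gamma)\quad\text{and}\quad \theta_2\ge (1-1/e)(\mathrm{OPT}-\beta)+\gamma-2(\theta_1-\beta).$$
   Context: $V$ is a finite ground set with $|V|=n$; $k,l$ are integers with $1\le l<k\le n$. For $i=1,\dots,m$, $f_i:2^V\to\mathbb{R}_{\ge 0}$; monotone means $A\subseteq B\Rightarrow f_i(A)\le f_i(B)$, submodular means $f_i(A)+f_i(B)\ge f_i(A\cup B)+f_i(A\cap B)$. Write $\Delta_i(e\mid S)=f_i(S\cup\{e\})-f_i(S)$ and $$\mathrm{OPT}=\max_{S_{\rm tr}\subseteq V,\,|S_{\rm tr}|\le l}\;\sum_{i=1}^m\;\max_{S_i\subseteq V,\,|S_i|\le k-l} f_i(S_{\rm tr}\cup S_i).$$ Algorithm 1: start with all sets empty. Phase 1: for $t=1,\dots,l$, choose $e^*\in\arg\max_{e\in V\setminus S_{\rm tr}}\sum_{i}\Delta_i(e\mid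 S_{\rm tr})$ and add it to $S_{\rm tr}$. Phase 2: for $t=1,\dots,k-l$ and each $i$, choose $e_i^*\in\arg\max_{e\in V\setminus(S_{\rm tr}\cup S_i)}\Delta_i(e\mid S_{\rm tr}\cup S_i)$ and add it to $S_i$. Algorithm 2: start with all sets empty. Phase 1: for each $i$ and $t=1,\dots,k-l$, choose $e_i^*\in\arg\max_{e\in V\setminus S_i}\Delta_i(e\mid S_i)$ and add it to $S_i$. Phase 2: for $t=1,\dots,l$, choose $e^*\in\arg\max_{e\in V\setminus S_{\rm tr}}\sum_i\Delta_i(e\mid S_{\rm tr}\cup S_i)$ and add it to $S_{\rm tr}$. Ties are broken arbitrarily. *)

theory Defs
  imports Complex_Main
begin

definition monotone_fn :: "'a set \<Rightarrow> ('a set \<Rightarrow> real) \<Rightarrow> bool" where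
  "monotone_fn V g \<longleftrightarrow> (\<forall>A B. A \<subseteq> B \<and> B \<subseteq> V \<longrightarrow> g A \<le> g B)"

definition submodular_fn :: "'a set \<Rightarrow> ('a set \<Rightarrow> real) \<Rightarrow> bool" where
  "submodular_fn V g \<longleftrightarrow> (\<forall>A B. A \<subseteq> V \<and> B \<subseteq> V \<longrightarrow> g A + g B \<ge> g (A \<union> B) + g (A \<inter> B))"

definition marg :: "('a set \<Rightarrow> real) \<Rightarrow> 'a \<Rightarrow> 'a set \<Rightarrow> real" where
  "marg g e S = g (insert e S) - g S"

definition greedy_chain :: "'a set \<Rightarrow> 'a set \<Rightarrow> ('a set \<Rightarrow> 'a \<Rightarrow> real) \<Rightarrow> nat \<Rightarrow> (nat \<Rightarrow> 'a set) \<Rightarrow> bool" where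
  "greedy_chain V B gain T X \<longleftrightarrow> X 0 = {} \<and>
     (\<forall>t<T. \<exists>e \<in> V - (B \<union> X t). X (Suc t) = insert e (X t) \<and>
        (\<forall>e' \<in> V - (B \<union> X t). gain (X t) e' \<le> gain (X t) e))"

definition alg1_output :: "'a set \<Rightarrow> (nat \<Rightarrow> 'a set \<Rightarrow> real) \<Rightarrow> nat \<Rightarrow> nat \<Rightarrow> nat \<Rightarrow> 'a set \<Rightarrow> (nat \<Rightarrow> 'a set) \<Rightarrow> bool" where
  "alg1_output V f m k l Str S \<longleftrightarrow>
     (\<exists>X. greedy_chain V {} (\<lambda>A e. \<Sum>i\<in>{1..m}. marg (f i) e A) l X \<and> Str = X l) \<and>
     (\<forall>i\<in>{1..m}. \<exists>Y. greedy_chain V Str (\<lambda>A e. marg (f i) e (Str \<union> A)) (k - l) Y \<and> S i = Y (k - l))"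

definition alg2_output :: "'a set \<Rightarrow> (nat \<Rightarrow> 'a set \<Rightarrow> real) \<Rightarrow> nat \<Rightarrow> nat \<Rightarrow> nat \<Rightarrow> 'a set \<Rightarrow> (nat \<Rightarrow> 'a set) \<Rightarrow> bool" where
  "alg2_output V f m k l Str S \<longleftrightarrow>
     (\<forall>i\<in>{1..m}. \<exists>Y. greedy_chain V {} (\<lambda>A e. marg (f i) e A) (k - l) Y \<and> S i = Y (k - l)) \<and>
     (\<exists>X. greedy_chain V {} (\<lambda>A e. \<Sum>i\<in>{1..m}. marg (f i) e (A \<union> S i)) l X \<and> Str = X l)"

definition OPT :: "'a set \<Rightarrow> (nat \<Rightarrow> 'a set \<Rightarrow> real) \<Rightarrow> nat \<Rightarrow> nat \<Rightarrow> nat \<Rightarrow> real" where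
  "OPT V f m k l = Max {(\<Sum>i\<in>{1..m}. Max {f i (T \<union> S) | S. S \<subseteq> V \<and> card S \<le> k - l}) | T. T \<subseteq> V \<and> card T \<le> l}"

end

theory Submission
  imports Defs
begin

lemma chain_props:
  assumes "greedy_chain V B gain T X" "t \<le> T"
  shows "X t \<subseteq> V - B \<and> card (X t) = t \<and> finite (X t)"
  using assms(2)
proof (induction t)
  case 0 then show ?case using assms(1) by (simp add: greedy_chain_def)
next
  case (Suc t)
  then have IH: "X t \<subseteq> V - B \<and> card (X t) = t \<and> finite (X t)" by simp
  from Suc.prems assms(1) obtain e where e: "e \<in> V - (B \<union> X t)" "X (Suc t) = insert e (X t)"
    unfolding greedy_chain_def by (meson Suc_le_lessD)
  show ?case using IH e by auto
qed

lemma mono_le: "monotone_fn V F \<Longrightarrow> A \<subseteq> B \<Longrightarrow> B \<subseteq> V \<Longrightarrow> F A \<le> F B"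
  unfolding monotone_fn_def by blast

lemma submod_le: "submodular_fn V F \<Longrightarrow> A \<subseteq> V \<Longrightarrow> B \<subseteq> V \<Longrightarrow> F (A \<union> B) + F (A \<inter> B) \<le> F A + F B"
  unfolding submodular_fn_def by blast

lemma submod_sum:
  assumes sub: "submodular_fn V F" and "finite C" "C \<subseteq> V" "A \<subseteq> V"
  shows "F (A \<union> C) - F A \<le> (\<Sum>c\<in>C. F (insert c A) - F A)"
  using assms(2,3)
proof (induction C rule: finite_induct)
  case empty then show ?case by simp
next
  case (insert c C)
  have s1: "insert c A \<subseteq> V" "A \<union> C \<subseteq> V" using insert.prems assms(4) by auto
  have "F (insert c A) + F (A \<union> C) \<ge> F (insert c A \<union> (A \<union> C)) + F (insert c A \<inter> (A \<union> C))"
    using sub s1 unfolding submodular_fn_def by blast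
  moreover have "insert c A \<union> (A \<union> C) = A \<union> insert c C" by auto
  moreover have "insert c A \<inter> (A \<union> C) = A" using insert.hyps(2) by auto
  ultimately have "F (A \<union> insert c C) - F (A \<union> C) \<le> F (insert c A) - F A" by simp
  moreover have "F (A \<union> C) - F A \<le> (\<Sum>c\<in>C. F (insert c A) - F A)" using insert by auto
  ultimately show ?case using insert.hyps by simp
qed

lemma greedy_bound:
  fixes F :: "'a set \<Rightarrow> real"
  assumes finV: "finite V" and BV: "B \<subseteq> V"
    and mono: "monotone_fn V F" and sub: "submodular_fn V F"
    and ch: "greedy_chain V B gain T X"
    and geq: "\<And>A e. gain A e = F (insert e (B \<union> A)) - F (B \<union> A)"
    and Tpos: "0 < T" and OV: "Oc \<subseteq> V" and cO: "card Oc \<le> T"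
  shows "F (B \<union> X T) - F B \<ge> (1 - 1 / exp 1) * (F (B \<union> Oc) - F B)"
proof -
  define d where "d t = F (B \<union> Oc) - F (B \<union> X t)" for t
  have step: "d t \<le> real T * (d t - d (Suc t))" if tT: "t < T" for t
  proof -
    let ?A = "B \<union> X t"
    have XV: "X t \<subseteq> V - B" using chain_props[OF ch] that by auto
    hence AV: "?A \<subseteq> V" using BV by auto
    obtain e where e: "e \<in> V - (B \<union> X t)" "X (Suc t) = insert e (X t)"
      and best: "\<forall>e' \<in> V - (B \<union> X t). gain (X t) e' \<le> gain (X t) e"
      using ch tT unfolding greedy_chain_def by blast
    define g where "g = F (insert e ?A) - F ?A"
    have "insert e ?A \<subseteq> V" using AV e(1) by auto
    hence "F ?A \<le> F (insert e ?A)" using mono unfolding monotone_fn_def by (meson subset_insertI)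
    hence g0: "g \<ge> 0" unfolding g_def by simp
    have finO: "finite Oc" using OV finV finite_subset by blast
    have "F (B \<union> Oc) \<le> F (?A \<union> Oc)" using AV OV by (intro mono_le[OF mono]) auto
    also have "F (?A \<union> Oc) \<le> F ?A + (\<Sum>x\<in>Oc. F (insert x ?A) - F ?A)"
      using submod_sum[OF sub finO OV AV] by simp
    also have "(\<Sum>x\<in>Oc. F (insert x ?A) - F ?A) \<le> (\<Sum>x\<in>Oc. g)"
    proof (rule sum_mono)
      fix x assume xO: "x \<in> Oc"
      show "F (insert x ?A) - F ?A \<le> g"
      proof (cases "x \<in> ?A")
        case True then show ?thesis using g0 by (simp add: insert_absorb)
      next
        case False
        then have "x \<in> V - (B \<union> X t)" using xO OV by auto
        then show ?thesis using best geq unfolding g_def by auto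
      qed
    qed
    also have "(\<Sum>x\<in>Oc. g) = real (card Oc) * g" by simp
    also have "\<dots> \<le> real T * g" using cO g0 by (simp add: mult_right_mono)
    finally have "F (B \<union> Oc) \<le> F ?A + real T * g" by simp
    moreover have "F (B \<union> X (Suc t)) = F (insert e ?A)" using e(2) by simp
    ultimately show ?thesis unfolding d_def g_def by simp
  qed
  have rec: "d (Suc t) \<le> (1 - 1 / real T) * d t" if "t < T" for t
  proof -
    have "d t \<le> real T * (d t - d (Suc t))" using step that .
    hence "real T * d (Suc t) \<le> (real T - 1) * d t" by (simp add: algebra_simps)
    thus ?thesis using Tpos by (simp add: field_simps)
  qed
  have q0: "0 \<le> 1 - 1 / real T" using Tpos by simp
  have pw: "d t \<le> (1 - 1 / real T) ^ t * d 0" if "t \<le> T" for t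
    using that
  proof (induction t)
    case 0 then show ?case by simp
  next
    case (Suc t)
    then have "d t \<le> (1 - 1 / real T) ^ t * d 0" by simp
    hence "(1 - 1/real T) * d t \<le> (1 - 1/real T) * ((1 - 1 / real T) ^ t * d 0)"
      using q0 by (rule mult_left_mono)
    with rec[of t] Suc.prems show ?case by simp
  qed
  have X0: "X 0 = {}" using ch by (simp add: greedy_chain_def)
  have "F B \<le> F (B \<union> Oc)" using BV OV by (intro mono_le[OF mono]) auto
  hence d0: "d 0 \<ge> 0" using X0 unfolding d_def by auto
  have ex: "(1 - 1 / real T) ^ T \<le> exp (-1)"
  proof -
    have "1 - 1 / real T \<le> exp (- (1 / real T))" using exp_ge_add_one_self[of "- (1/real T)"] by simp
    hence "(1 - 1 / real T) ^ T \<le> exp (- (1 / real T)) ^ T" using q0 by (rule power_mono)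
    also have "\<dots> = exp (real T * (- (1 / real T)))" by (simp only: exp_of_nat_mult)
    also have "real T * (- (1 / real T)) = -1" using Tpos by simp
    finally show ?thesis by simp
  qed
  have "(1 - 1 / real T) ^ T * d 0 \<le> exp (-1) * d 0" using ex d0 by (rule mult_right_mono)
  hence dT: "d T \<le> exp (-1) * d 0" using pw[of T] by simp
  have e1: "exp (-1) = 1 / exp (1::real)" by (simp add: exp_minus field_simps)
  show ?thesis using dT X0 unfolding d_def e1 by (simp add: left_diff_distrib)
qed


lemma P1:
  assumes mono: "monotone_fn V f" and sub: "submodular_fn V f"
    and TV: "T \<subseteq> V" and SV: "S \<subseteq> V" and RV: "R \<subseteq> V" and QV: "Q \<subseteq> V"
  shows "f (T \<union> S) - f (R \<union> S) \<le> (f (T \<union> Q) - f Q) + (f (R \<union> Q) - f R)"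
proof -
  have 1: "f (T \<union> S) \<le> f (T \<union> R \<union> S)" using TV SV RV by (intro mono_le[OF mono]) auto
  have 2: "f ((T \<union> R) \<union> (R \<union> S)) + f ((T \<union> R) \<inter> (R \<union> S)) \<le> f (T \<union> R) + f (R \<union> S)"
    using TV SV RV by (intro submod_le[OF sub]) auto
  have 3: "f R \<le> f ((T \<union> R) \<inter> (R \<union> S))" using TV SV RV by (intro mono_le[OF mono]) auto
  have 4: "f (T \<union> R) \<le> f (T \<union> R \<union> Q)" using TV QV RV by (intro mono_le[OF mono]) auto
  have 5: "f ((T \<union> Q) \<union> (R \<union> Q)) + f ((T \<union> Q) \<inter> (R \<union> Q)) \<le> f (T \<union> Q) + f (R \<union> Q)"
    using TV QV RV by (intro submod_le[OF sub]) auto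
  have 6: "f Q \<le> f ((T \<union> Q) \<inter> (R \<union> Q))" using TV QV RV by (intro mono_le[OF mono]) auto
  have e1: "(T \<union> R) \<union> (R \<union> S) = T \<union> R \<union> S" by auto
  have e2: "(T \<union> Q) \<union> (R \<union> Q) = T \<union> R \<union> Q" by auto
  show ?thesis using 1 2 3 4 5 6 unfolding e1 e2 by linarith
qed

lemma P2:
  assumes mono: "monotone_fn V f" and sub: "submodular_fn V f"
    and TV: "T \<subseteq> V" and SV: "S \<subseteq> V" and RV: "R \<subseteq> V" and QV: "Q \<subseteq> V"
  shows "f (T \<union> S) + f Q + f R \<le> f (T \<union> Q) + f (R \<union> S) + f (R \<union> Q)"
proof -
  have 1: "f (T \<union> S) \<le> f (T \<union> S \<union> Q)" using TV SV QV by (intro mono_le[OF mono]) auto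
  have 2: "f ((T \<union> Q) \<union> (S \<union> Q)) + f ((T \<union> Q) \<inter> (S \<union> Q)) \<le> f (T \<union> Q) + f (S \<union> Q)"
    using TV SV QV by (intro submod_le[OF sub]) auto
  have 3: "f Q \<le> f ((T \<union> Q) \<inter> (S \<union> Q))" using TV SV QV by (intro mono_le[OF mono]) auto
  have 4: "f ((R \<union> S) \<union> (R \<union> Q)) + f ((R \<union> S) \<inter> (R \<union> Q)) \<le> f (R \<union> S) + f (R \<union> Q)"
    using RV SV QV by (intro submod_le[OF sub]) auto
  have 5: "f (S \<union> Q) \<le> f ((R \<union> S) \<union> (R \<union> Q))" using RV SV QV by (intro mono_le[OF mono]) auto
  have 6: "f R \<le> f ((R \<union> S) \<inter> (R \<union> Q))" using RV SV QV by (intro mono_le[OF mono]) auto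
  have e1: "(T \<union> Q) \<union> (S \<union> Q) = T \<union> S \<union> Q" by auto
  show ?thesis using 1 2 3 4 5 6 unfolding e1 by linarith
qed

theorem mainTheorem8:
  fixes V :: "'a set" and f :: "nat \<Rightarrow> 'a set \<Rightarrow> real" and m k l :: nat
    and Str1 Str2 :: "'a set" and S1 S2 :: "nat \<Rightarrow> 'a set"
  assumes "finite V" and "1 \<le> l" and "l < k" and "k \<le> card V"
    and "\<And>i A. i \<in> {1..m} \<Longrightarrow> A \<subseteq> V \<Longrightarrow> f i A \<ge> 0"
    and "\<And>i. i \<in> {1..m} \<Longrightarrow> monotone_fn V (f i)"
    and "\<And>i. i \<in> {1..m} \<Longrightarrow> submodular_fn V (f i)"
    and "alg1_output V f m k l Str1 S1"
    and "alg2_output V f m k l Str2 S2"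
  shows "let \<theta>1 = (\<Sum>i\<in>{1..m}. f i (Str1 \<union> S1 i));
             \<theta>2 = (\<Sum>i\<in>{1..m}. f i (Str2 \<union> S2 i));
             \<beta> = (\<Sum>i\<in>{1..m}. f i Str1);
             \<gamma> = (\<Sum>i\<in>{1..m}. f i (S2 i))
         in \<theta>1 \<ge> (1 - 1 / exp 1) * (OPT V f m k l - \<gamma>) + \<beta> - 2 * (\<theta>2 - \<gamma>) \<and>
            \<theta>2 \<ge> (1 - 1 / exp 1) * (OPT V f m k l - \<beta>) + \<gamma> - 2 * (\<theta>1 - \<beta>)"
proof -
  note finV = assms(1)
  note monof = assms(6) and subf = assms(7)
  define c :: real where "c = 1 - 1 / exp 1"
  have c0: "c \<ge> 0" unfolding c_def by simp
  obtain X1 where X1: "greedy_chain V {} (\<lambda>A e. \<Sum>i\<in>{1..m}. marg (f i) e A) l X1" "Str1 = X1 l"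
    using assms(8) unfolding alg1_output_def by blast
  have Y1: "\<forall>i\<in>{1..m}. \<exists>Y. greedy_chain V Str1 (\<lambda>A e. marg (f i) e (Str1 \<union> A)) (k - l) Y \<and> S1 i = Y (k - l)"
    using assms(8) unfolding alg1_output_def by blast
  have Y2: "\<forall>i\<in>{1..m}. \<exists>Y. greedy_chain V {} (\<lambda>A e. marg (f i) e A) (k - l) Y \<and> S2 i = Y (k - l)"
    using assms(9) unfolding alg2_output_def by blast
  obtain X2 where X2: "greedy_chain V {} (\<lambda>A e. \<Sum>i\<in>{1..m}. marg (f i) e (A \<union> S2 i)) l X2" "Str2 = X2 l"
    using assms(9) unfolding alg2_output_def by blast
  have cp1: "X1 l \<subseteq> V - {} \<and> card (X1 l) = l \<and> finite (X1 l)" by (rule chain_props[OF X1(1)]) simp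
  have Str1V: "Str1 \<subseteq> V" and cStr1: "card Str1 = l" using cp1 X1(2) by simp_all
  have S2V: "S2 i \<subseteq> V" and cS2: "card (S2 i) = k - l" if iI: "i \<in> {1..m}" for i
  proof -
    obtain Y where Y: "greedy_chain V {} (\<lambda>A e. marg (f i) e A) (k - l) Y" "S2 i = Y (k - l)"
      using Y2 iI by blast
    have "Y (k - l) \<subseteq> V - {} \<and> card (Y (k - l)) = k - l \<and> finite (Y (k - l))" by (rule chain_props[OF Y(1)]) simp
    thus "S2 i \<subseteq> V" "card (S2 i) = k - l" using Y(2) by simp_all
  qed
  have A1: "f i (Str1 \<union> S1 i) - f i Str1 \<ge> c * (f i (Str1 \<union> O') - f i Str1)"
    if i: "i \<in> {1..m}" and OV: "O' \<subseteq> V" and cO: "card O' \<le> k - l" for i O'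
  proof -
    obtain Y where Y: "greedy_chain V Str1 (\<lambda>A e. marg (f i) e (Str1 \<union> A)) (k - l) Y" "S1 i = Y (k - l)"
      using Y1 i by blast
    show ?thesis unfolding c_def Y(2)
      by (rule greedy_bound[OF finV Str1V monof[OF i] subf[OF i] Y(1) _ _ OV cO])
         (use assms(3) in \<open>auto simp: marg_def\<close>)
  qed
  define G where "G A = (\<Sum>i\<in>{1..m}. f i (A \<union> S2 i))" for A
  have monoG: "monotone_fn V G" unfolding monotone_fn_def G_def
  proof (intro allI impI sum_mono)
    fix A B i assume "A \<subseteq> B \<and> B \<subseteq> V" "i \<in> {1..m}"
    thus "f i (A \<union> S2 i) \<le> f i (B \<union> S2 i)" using S2V by (intro mono_le[OF monof]) auto
  qed
  have subG: "submodular_fn V G" unfolding submodular_fn_def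
  proof (intro allI impI)
    fix A B assume AB: "A \<subseteq> V \<and> B \<subseteq> V"
    have "(\<Sum>i\<in>{1..m}. f i (A \<union> B \<union> S2 i) + f i (A \<inter> B \<union> S2 i)) \<le> (\<Sum>i\<in>{1..m}. f i (A \<union> S2 i) + f i (B \<union> S2 i))"
    proof (rule sum_mono)
      fix i assume i: "i \<in> {1..m}"
      have "f i ((A \<union> S2 i) \<union> (B \<union> S2 i)) + f i ((A \<union> S2 i) \<inter> (B \<union> S2 i)) \<le> f i (A \<union> S2 i) + f i (B \<union> S2 i)"
        using AB S2V[OF i] by (intro submod_le[OF subf[OF i]]) auto
      moreover have "(A \<union> S2 i) \<union> (B \<union> S2 i) = A \<union> B \<union> S2 i" "(A \<union> S2 i) \<inter> (B \<union> S2 i) = A \<inter> B \<union> S2 i" by auto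
      ultimately show "f i (A \<union> B \<union> S2 i) + f i (A \<inter> B \<union> S2 i) \<le> f i (A \<union> S2 i) + f i (B \<union> S2 i)" by simp
    qed
    thus "G A + G B \<ge> G (A \<union> B) + G (A \<inter> B)" unfolding G_def by (simp add: sum.distrib)
  qed
  have B2: "G Str2 - G {} \<ge> c * (G O' - G {})" if OV: "O' \<subseteq> V" and cO: "card O' \<le> l" for O'
  proof -
    have "G ({} \<union> X2 l) - G {} \<ge> c * (G ({} \<union> O') - G {})" unfolding c_def
      by (rule greedy_bound[OF finV _ monoG subG X2(1) _ _ OV cO])
         (use assms(2) in \<open>auto simp: marg_def G_def sum_subtractf\<close>)
    thus ?thesis using X2(2) by simp
  qed
  define inner where "inner T i = Max {f i (T \<union> S) | S. S \<subseteq> V \<and> card S \<le> k - l}" for T i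
  have finPow: "finite {S. S \<subseteq> V \<and> P S}" for P :: "'a set \<Rightarrow> bool"
    using finV by (rule rev_finite_subset[OF finite_Pow_iff[THEN iffD2]]) auto
  have "OPT V f m k l \<in> {(\<Sum>i\<in>{1..m}. inner T i) | T. T \<subseteq> V \<and> card T \<le> l}"
    unfolding OPT_def inner_def
    by (rule Max_in) (use finPow in \<open>auto intro: finite_image_set\<close>)
  then obtain Ts where Ts: "Ts \<subseteq> V" "card Ts \<le> l" "OPT V f m k l = (\<Sum>i\<in>{1..m}. inner Ts i)" by blast
  have "\<exists>S. S \<subseteq> V \<and> card S \<le> k - l \<and> inner Ts i = f i (Ts \<union> S)" for i
  proof -
    have "inner Ts i \<in> {f i (Ts \<union> S) | S. S \<subseteq> V \<and> card S \<le> k - l}"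
      unfolding inner_def by (rule Max_in) (use finPow in \<open>auto intro: finite_image_set\<close>)
    thus ?thesis by blast
  qed
  then obtain Sopt where Sopt: "\<And>i. Sopt i \<subseteq> V" "\<And>i. card (Sopt i) \<le> k - l"
    "\<And>i. inner Ts i = f i (Ts \<union> Sopt i)" by metis
  have OPTeq: "OPT V f m k l = (\<Sum>i\<in>{1..m}. f i (Ts \<union> Sopt i))" using Ts(3) Sopt(3) by simp
  define \<theta>1 where "\<theta>1 = (\<Sum>i\<in>{1..m}. f i (Str1 \<union> S1 i))"
  define \<theta>2 where "\<theta>2 = (\<Sum>i\<in>{1..m}. f i (Str2 \<union> S2 i))"
  define \<beta> where "\<beta> = (\<Sum>i\<in>{1..m}. f i Str1)"
  define \<gamma> where "\<gamma> = (\<Sum>i\<in>{1..m}. f i (S2 i))"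
  define a where "a = (\<Sum>i\<in>{1..m}. f i (Str1 \<union> Sopt i))"
  define b where "b = (\<Sum>i\<in>{1..m}. f i (Str1 \<union> S2 i))"
  define gT where "gT = (\<Sum>i\<in>{1..m}. f i (Ts \<union> S2 i))"
  define opt where "opt = OPT V f m k l"
  have G2: "G Str2 = \<theta>2" and G0: "G {} = \<gamma>" and GT: "G Ts = gT" and GS: "G Str1 = b"
    unfolding G_def \<theta>2_def \<gamma>_def gT_def b_def by simp_all
  have hA: "\<theta>1 - \<beta> \<ge> c * (a - \<beta>)"
  proof -
    have "(\<Sum>i\<in>{1..m}. c * (f i (Str1 \<union> Sopt i) - f i Str1)) \<le> (\<Sum>i\<in>{1..m}. f i (Str1 \<union> S1 i) - f i Str1)"
      using A1 Sopt by (intro sum_mono) auto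
    thus ?thesis unfolding \<theta>1_def \<beta>_def a_def by (simp add: sum_distrib_left[symmetric] sum_subtractf)
  qed
  have hA': "\<theta>1 - \<beta> \<ge> c * (b - \<beta>)"
  proof -
    have "(\<Sum>i\<in>{1..m}. c * (f i (Str1 \<union> S2 i) - f i Str1)) \<le> (\<Sum>i\<in>{1..m}. f i (Str1 \<union> S1 i) - f i Str1)"
      using A1 S2V cS2 by (intro sum_mono) auto
    thus ?thesis unfolding \<theta>1_def \<beta>_def b_def by (simp add: sum_distrib_left[symmetric] sum_subtractf)
  qed
  have hB: "\<theta>2 - \<gamma> \<ge> c * (gT - \<gamma>)" using B2[OF Ts(1,2)] G2 G0 GT by simp
  have hB': "\<theta>2 - \<gamma> \<ge> c * (b - \<gamma>)" using B2[OF Str1V] cStr1 G2 G0 GS by simp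
  have hP1: "opt - a \<le> (gT - \<gamma>) + (b - \<beta>)"
  proof -
    have "(\<Sum>i\<in>{1..m}. f i (Ts \<union> Sopt i) - f i (Str1 \<union> Sopt i)) \<le>
          (\<Sum>i\<in>{1..m}. (f i (Ts \<union> S2 i) - f i (S2 i)) + (f i (Str1 \<union> S2 i) - f i Str1))"
      using P1[OF monof subf Ts(1) Sopt(1) Str1V S2V] by (intro sum_mono) auto
    thus ?thesis unfolding opt_def OPTeq a_def gT_def \<gamma>_def b_def \<beta>_def
      by (simp add: sum_subtractf sum.distrib)
  qed
  have hP2: "opt + \<gamma> + \<beta> \<le> gT + a + b"
  proof -
    have "(\<Sum>i\<in>{1..m}. f i (Ts \<union> Sopt i) + f i (S2 i) + f i Str1) \<le>
          (\<Sum>i\<in>{1..m}. f i (Ts \<union> S2 i) + f i (Str1 \<union> Sopt i) + f i (Str1 \<union> S2 i))"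
      using P2[OF monof subf Ts(1) Sopt(1) Str1V S2V] by (intro sum_mono) auto
    thus ?thesis unfolding opt_def OPTeq a_def gT_def \<gamma>_def b_def \<beta>_def
      by (simp add: sum.distrib)
  qed
  have m1: "c * (opt - \<gamma>) \<le> c * ((a - \<beta>) + (gT - \<gamma>) + (b - \<gamma>))"
    using hP1 c0 by (intro mult_left_mono) auto
  have m2: "c * (opt - \<beta>) \<le> c * ((gT - \<gamma>) + (a - \<beta>) + (b - \<beta>))"
    using hP2 c0 by (intro mult_left_mono) auto
  have "c * (opt - \<gamma>) \<le> (\<theta>1 - \<beta>) + (\<theta>2 - \<gamma>) + (\<theta>2 - \<gamma>)"
    using m1[unfolded distrib_left] add_mono[OF add_mono[OF hA hB] hB'] by (rule order_trans)
  hence r1: "\<theta>1 \<ge> c * (opt - \<gamma>) + \<beta> - 2 * (\<theta>2 - \<gamma>)" by simp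
  have "c * (opt - \<beta>) \<le> (\<theta>2 - \<gamma>) + (\<theta>1 - \<beta>) + (\<theta>1 - \<beta>)"
    using m2[unfolded distrib_left] add_mono[OF add_mono[OF hB hA] hA'] by (rule order_trans)
  hence r2: "\<theta>2 \<ge> c * (opt - \<beta>) + \<gamma> - 2 * (\<theta>1 - \<beta>)" by simp
  show ?thesis using r1 r2 unfolding Let_def c_def opt_def \<theta>1_def \<theta>2_def \<beta>_def \<gamma>_def by blast
qed

end
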